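(* Let $\boldsymbol X \in \mathbb{R}^{n\times d}$, $\boldsymbol y \in \mathbb{R}^n$, $\boldsymbol M = \boldsymbol X^\top \boldsymbol X$, $\boldsymbol r = \boldsymbol X^\top \boldsymbol y$. Assume (A1) $\boldsymbol r > \mathbf 0$ and (A2) $M_{ij}\le 0$ for all $i\neq j$. Then $\boldsymbol M$ is positive definite; in particular $n\ge d$.
   Context: $\boldsymbol r>\mathbf 0$ means every coordinate of $\boldsymbol r$ is positive. *)

theory Defs
  imports "HOL-Analysis.Analysis"
begin

definition pos_def_matrix :: "real^'d^'d \<Rightarrow> bool" where
  "pos_def_matrix M \<longleftrightarrow> transpose M = M \<and> (\<forall>v. v \<noteq> 0 \<longrightarrow> v \<bullet> (M *v v) > 0)"

end

theory Submission
  imports Defs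
begin

lemma quad_eq:
  fixes X :: "real^'d^'n"
  shows "v \<bullet> ((transpose X ** X) *v v) = (X *v v) \<bullet> (X *v v)"
proof -
  have "v \<bullet> ((transpose X ** X) *v v) = v \<bullet> (transpose X *v (X *v v))"
    by (simp add: matrix_vector_mul_assoc)
  also have "\<dots> = ((X *v v) v* X) \<bullet> v"
    by (simp add: inner_commute)
  also have "\<dots> = (X *v v) \<bullet> (X *v v)" by (rule dot_lmul_matrix)
  finally show ?thesis .
qed

lemma quad_sum:
  fixes M :: "real^'d^'d"
  shows "v \<bullet> (M *v v) = (\<Sum>i\<in>UNIV. \<Sum>j\<in>UNIV. v$i * M$i$j * v$j)"
  by (simp add: inner_vec_def matrix_vector_mult_def sum_distrib_left mult.assoc)

theorem proposition1:
  fixes X :: "real^'d^'n" and y :: "real^'n"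
  assumes A1: "\<forall>i. (transpose X *v y) $ i > 0"
    and A2: "\<forall>i j. i \<noteq> j \<longrightarrow> (transpose X ** X) $ i $ j \<le> 0"
  shows "pos_def_matrix (transpose X ** X) \<and> CARD('n) \<ge> CARD('d)"
proof -
  let ?M = "transpose X ** X"
  have ker: "X *v v = 0 \<Longrightarrow> v = 0" for v
  proof (rule ccontr)
    assume Xv: "X *v v = 0" and nz: "v \<noteq> 0"
    define w :: "real^'d" where "w = (\<chi> i. \<bar>v$i\<bar>)"
    have "w \<bullet> (?M *v w) \<le> v \<bullet> (?M *v v)"
      unfolding quad_sum
    proof (intro sum_mono)
      fix i j
      show "w$i * ?M$i$j * w$j \<le> v$i * ?M$i$j * v$j"
      proof (cases "i = j")
        case True thus ?thesis by (simp add: w_def abs_mult_self_eq)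
      next
        case False
        hence m: "?M$i$j \<le> 0" using A2 by blast
        have "v$i * v$j \<le> \<bar>v$i\<bar> * \<bar>v$j\<bar>"
          by (metis abs_ge_self abs_mult)
        hence "?M$i$j * (\<bar>v$i\<bar> * \<bar>v$j\<bar>) \<le> ?M$i$j * (v$i * v$j)"
          using m by (simp add: mult_left_mono_neg)
        thus ?thesis by (simp add: w_def algebra_simps)
      qed
    qed
    also have "\<dots> = 0" using Xv by (simp add: quad_eq)
    finally have "(X *v w) \<bullet> (X *v w) \<le> 0" by (simp add: quad_eq)
    hence Xw: "X *v w = 0" by (metis inner_gt_zero_iff not_less)
    have "(transpose X *v y) \<bullet> w = (y v* X) \<bullet> w" by simp
    also have "\<dots> = y \<bullet> (X *v w)" by (rule dot_lmul_matrix)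
    also have "\<dots> = 0" using Xw by simp
    finally have z: "(transpose X *v y) \<bullet> w = 0" .
    obtain k where k: "v$k \<noteq> 0" using nz by (metis vec_eq_iff zero_index)
    have "(transpose X *v y) \<bullet> w = (\<Sum>i\<in>UNIV. (transpose X *v y)$i * w$i)"
      by (simp add: inner_vec_def)
    also have "\<dots> > 0"
    proof -
      have p: "0 < (transpose X *v y)$k * w$k" using A1 k by (simp add: w_def)
      have nn: "\<forall>i\<in>UNIV. 0 \<le> (transpose X *v y)$i * w$i"
        using A1 by (simp add: w_def less_imp_le)
      show ?thesis by (rule sum_pos2[where f="\<lambda>i. (transpose X *v y)$i * w$i", OF finite UNIV_I p]) (use nn in auto)
    qed
    finally show False using z by simp
  qed
  have pd: "pos_def_matrix ?M"
    unfolding pos_def_matrix_def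
  proof (intro conjI allI impI)
    show "transpose ?M = ?M" by (simp add: matrix_transpose_mul)
    fix v :: "real^'d" assume "v \<noteq> 0"
    hence "X *v v \<noteq> 0" using ker by blast
    thus "0 < v \<bullet> (?M *v v)" by (simp add: quad_eq)
  qed
  have "inj ((*v) X)"
  proof (rule injI)
    fix a b assume "X *v a = X *v b"
    hence "X *v (a - b) = 0" by (simp add: matrix_vector_mult_diff_distrib)
    hence "a - b = 0" by (rule ker)
    thus "a = b" by simp
  qed
  hence "rank X = CARD('d)" by (simp add: full_rank_injective)
  moreover have "rank X \<le> min CARD('n) CARD('d)" by (rule rank_bound)
  ultimately show ?thesis using pd by simp
qed

end
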